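(* Let $n$ be a positive integer and define $$ F_n(x,b,q)=\sum_{k=0}^n \frac{(q^{-n};q)_k\,(b;q)_k\,(x;q)_k}{(q;q)_k\,(bq^{1-n};q^2)_k}\, q^k . $$ Then, as rational functions in the indeterminates $x,b,q$, $F_n(x,b,q)=(-1)^n F_n(-x,b,q)$.
   Context: The $q$-shifted factorial is $(y;q)_0=1$ and $(y;q)_m=(1-y)(1-yq)\cdots(1-yq^{m-1})$ for $m\geqslant1$. *)

theory Defs
  imports Complex_Main
begin

definition qpoch :: "'a::comm_ring_1 \<Rightarrow> 'a \<Rightarrow> nat \<Rightarrow> 'a" where
  "qpoch y q m = (\<Prod>j<m. 1 - y * q ^ j)"

definition Fn :: "nat \<Rightarrow> complex \<Rightarrow> complex \<Rightarrow> complex \<Rightarrow> complex" where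
  "Fn n x b q = (\<Sum>k=0..n.
     qpoch (q powi (- int n)) q k * qpoch b q k * qpoch x q k
     / (qpoch q q k * qpoch (b * q powi (1 - int n)) (q\<^sup>2) k) * q ^ k)"

end

theory Submission imports Defs "HOL-Computational_Algebra.Polynomial"
begin

lemma qpoch_0[simp]: "qpoch y q 0 = 1" by (simp add: qpoch_def)

lemma qpoch_Suc: "qpoch y q (Suc m) = qpoch y q m * (1 - y * q ^ m)"
  by (simp add: qpoch_def)

lemma qpoch_Suc_left: "qpoch y q (Suc m) = (1 - y) * qpoch (y * q) q m"
  unfolding qpoch_def prod.lessThan_Suc_shift by (simp add: mult.assoc)

lemma qpoch_zero:
  assumes "y * q ^ m = 1" "m < k" shows "qpoch y q k = 0"
  unfolding qpoch_def using assms by (intro prod_zero) auto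

lemma qpoch_shift2:
  "qpoch y q m * (1 - y * q ^ m) * (1 - y * q ^ Suc m) = (1 - y) * (1 - y * q) * qpoch (y * q^2) q m"
proof -
  have "qpoch y q (Suc (Suc m)) = qpoch y q m * (1 - y * q ^ m) * (1 - y * q ^ Suc m)"
    by (simp add: qpoch_Suc)
  moreover have "qpoch y q (Suc (Suc m)) = (1 - y) * (1 - y * q) * qpoch (y * q^2) q m"
    by (simp add: qpoch_Suc_left power2_eq_square mult.assoc)
  ultimately show ?thesis by simp
qed

definition tm :: "complex \<Rightarrow> complex \<Rightarrow> complex \<Rightarrow> complex \<Rightarrow> nat \<Rightarrow> complex" where
  "tm a B c q i = qpoch a q i * qpoch B q i * q ^ i / (qpoch q q i * qpoch c (q\<^sup>2) i)"

definition GG :: "complex \<Rightarrow> complex \<Rightarrow> complex \<Rightarrow> complex \<Rightarrow> nat \<Rightarrow> complex" where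
  "GG a B c q i = (if i = 0 then 0 else
     qpoch a q i * qpoch B q i / ((1 - a) * qpoch q q (i - 1) * qpoch c (q\<^sup>2) i))"

lemma term_identity:
  fixes a B c q :: complex
  assumes q: "q \<noteq> 0" and a1: "a \<noteq> 1" and c1: "c \<noteq> 1" and Qi: "qpoch q q i \<noteq> 0"
    and Ci: "qpoch c (q\<^sup>2) i \<noteq> 0" and alt: "1 - c * (q\<^sup>2) ^ i \<noteq> 0 \<or> 1 - a * q ^ i = 0"
    and cdef: "c = a * B * q"
  shows "tm a B c q i - B * (1 - a * q) / (1 - c) * tm (a * q\<^sup>2) B (c * q\<^sup>2) q i
         = GG a B c q (Suc i) - GG a B c q i"
proof -
  define X where "X = qpoch a q i"
  define Y where "Y = qpoch B q i"
  define Q where "Q = qpoch q q i"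
  define C where "C = qpoch c (q\<^sup>2) i"
  define u where "u = q ^ i"
  have u2: "(q\<^sup>2) ^ i = u ^ 2" by (simp add: u_def power_mult_distrib[symmetric] power_mult[symmetric] mult.commute)
  have E: "(1 - a * q) * qpoch (a * q\<^sup>2) q i = X * (1 - a * u) * (1 - a * q * u) / (1 - a)"
    using qpoch_shift2[of a q i] a1 by (simp add: X_def u_def field_simps)
  have Cs: "qpoch (c * q\<^sup>2) (q\<^sup>2) i * (1 - c) = C * (1 - c * u^2)"
    using qpoch_Suc_left[of c "q^2" i] qpoch_Suc[of c "q^2" i] by (simp add: C_def u2 mult.commute)
  have Gi: "GG a B c q i = X * Y * (1 - u) / ((1 - a) * Q * C)"
  proof (cases i)
    case 0 then show ?thesis by (simp add: GG_def u_def)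
  next
    case (Suc j)
    have Qj: "Q = qpoch q q j * (1 - u)" using Suc by (simp add: Q_def u_def qpoch_Suc)
    have u1: "1 - u \<noteq> 0" using Qj Qi Q_def by auto
    have "GG a B c q i = X * Y / ((1 - a) * qpoch q q j * C)"
      using Suc by (simp add: GG_def X_def Y_def C_def)
    also have "\<dots> = (X * Y) * (1 - u) / (((1 - a) * qpoch q q j * C) * (1 - u))"
      using u1 by (rule nonzero_mult_divide_mult_cancel_right[symmetric])
    also have "\<dots> = X * Y * (1 - u) / ((1 - a) * (qpoch q q j * (1 - u)) * C)"
      by (simp add: ac_simps)
    finally show ?thesis using Qj by simp
  qed
  have GS: "GG a B c q (Suc i) = X * (1 - a * u) * (Y * (1 - B * u)) / ((1 - a) * Q * (C * (1 - c * u^2)))"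
    by (simp add: GG_def X_def Y_def Q_def C_def qpoch_Suc u_def u2)
  have t1: "tm a B c q i = X * Y * u / (Q * C)" by (simp add: tm_def X_def Y_def Q_def C_def u_def)
  have t2: "B * (1 - a * q) / (1 - c) * tm (a * q\<^sup>2) B (c * q\<^sup>2) q i
     = B * ((1 - a * q) * qpoch (a * q\<^sup>2) q i) * Y * u / (Q * (qpoch (c * q\<^sup>2) (q\<^sup>2) i * (1 - c)))"
    by (simp add: tm_def Y_def Q_def u_def ac_simps)
  show ?thesis
  proof (cases "1 - c * u^2 = 0")
    case False
    have "B * ((1 - a * q) * qpoch (a * q\<^sup>2) q i) * Y * u / (Q * (qpoch (c * q\<^sup>2) (q\<^sup>2) i * (1 - c)))
       = B * (X * (1 - a * u) * (1 - a * q * u) / (1 - a)) * Y * u / (Q * (C * (1 - c * u^2)))"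
      by (simp only: E Cs)
    note e = this
    define D where "D = (1 - a) * Q * C * (1 - c * u^2)"
    have D0: "D \<noteq> 0" using False a1 Qi Ci by (simp add: D_def Q_def C_def)
    have a0: "1 - a \<noteq> 0" using a1 by simp
    have Q0: "Q \<noteq> 0" using Qi by (simp add: Q_def)
    have C0: "C \<noteq> 0" using Ci by (simp add: C_def)
    have P: "u * (1 - a) * (1 - c * u^2) - B * u * (1 - a * u) * (1 - a * q * u)
        = (1 - a * u) * (1 - B * u) - (1 - u) * (1 - c * u^2)"
      unfolding cdef by algebra
    have k0: "(1 - a) * (1 - c * u^2) \<noteq> 0" using a0 False by simp
    have r1: "X * Y * u / (Q * C) = X * Y * (u * (1 - a) * (1 - c * u^2)) / D"
      unfolding D_def using nonzero_mult_divide_mult_cancel_right[OF k0, of "X * Y * u" "Q * C"]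
      by (simp add: ac_simps)
    have r2: "B * (X * (1 - a * u) * (1 - a * q * u) / (1 - a)) * Y * u / (Q * (C * (1 - c * u^2)))
        = X * Y * (B * u * (1 - a * u) * (1 - a * q * u)) / D"
      unfolding D_def by (simp add: ac_simps)
    have r3: "X * (1 - a * u) * (Y * (1 - B * u)) / ((1 - a) * Q * (C * (1 - c * u^2)))
        = X * Y * ((1 - a * u) * (1 - B * u)) / D"
      unfolding D_def by (simp add: ac_simps)
    have k1: "1 - c * u^2 \<noteq> 0" using False by simp
    have r4: "X * Y * (1 - u) / ((1 - a) * Q * C) = X * Y * ((1 - u) * (1 - c * u^2)) / D"
      unfolding D_def using nonzero_mult_divide_mult_cancel_right[OF k1, of "X * Y * (1 - u)" "(1 - a) * Q * C"]
      by (simp add: ac_simps)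
    have "X * Y * (u * (1 - a) * (1 - c * u^2)) / D - X * Y * (B * u * (1 - a * u) * (1 - a * q * u)) / D
        = X * Y * ((1 - a * u) * (1 - B * u)) / D - X * Y * ((1 - u) * (1 - c * u^2)) / D"
      unfolding diff_divide_distrib[symmetric] right_diff_distrib[symmetric] P ..
    then show ?thesis unfolding t1 t2 GS Gi e r1 r2 r3 r4 .
  next
    case True
    then have au: "a * u = 1" using alt u2 by (simp add: u_def)
    have "(1 - a * q) * qpoch (a * q\<^sup>2) q i = 0" using E au by simp
    then have z: "B * (1 - a * q) / (1 - c) * tm (a * q\<^sup>2) B (c * q\<^sup>2) q i = 0"
      unfolding t2 by simp
    have g0: "GG a B c q (Suc i) = 0" using GS au by simp
    have "u = 1 - (1 - u) / (1 - a) * (1 - a)" using a1 by simp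
    show ?thesis unfolding z g0 Gi t1 using a1 au Qi Ci
      by (simp add: Q_def[symmetric] C_def[symmetric] field_simps)
  qed
qed

lemma qpoch_nz_pow:
  assumes "qpoch q q N \<noteq> 0" "N \<ge> 1" shows "q ^ N \<noteq> 1"
proof
  assume h: "q ^ N = 1"
  have "q * q ^ (N - 1) = 1" using h assms(2) by (metis Suc_diff_1 less_le_trans power_Suc zero_less_one)
  then have "qpoch q q N = 0" using assms(2) by (intro qpoch_zero[of q q "N - 1"]) auto
  with assms(1) show False by simp
qed

lemma van_step:
  fixes q B c :: complex and N :: nat
  assumes q: "q \<noteq> 0" and N2: "N \<ge> 2"
    and Qh: "\<forall>k\<le>N. qpoch q q k \<noteq> 0" and Ch: "\<forall>k\<le>N. qpoch c (q\<^sup>2) k \<noteq> 0"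
    and cdef: "c = B * q * inverse (q ^ N)"
    and IH: "(\<Sum>i=0..N-2. tm (inverse (q ^ (N-2))) B (c * q\<^sup>2) q i) = 0"
  shows "(\<Sum>i=0..N. tm (inverse (q ^ N)) B c q i) = 0"
proof -
  define a where "a = inverse (q ^ N)"
  define al where "al = B * (1 - a * q) / (1 - c)"
  have aq2: "a * q\<^sup>2 = inverse (q ^ (N-2))"
  proof -
    have "q ^ N = q ^ (N - 2) * q\<^sup>2" using N2 by (metis le_add_diff_inverse2 power_add)
    then show ?thesis using q by (simp add: a_def field_simps)
  qed
  have qN: "q ^ N \<noteq> 1" using qpoch_nz_pow[of q N] Qh N2 by auto
  have a1: "a \<noteq> 1" using qN q by (auto simp: a_def field_simps)
  have c1: "c \<noteq> 1" using Ch[rule_format, of 1] N2 by (auto simp: qpoch_def)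
  have aqN: "a * q ^ N = 1" using q by (simp add: a_def)
  have cd: "c = a * B * q" by (simp add: cdef a_def)
  have T: "tm a B c q i - al * tm (a * q\<^sup>2) B (c * q\<^sup>2) q i = GG a B c q (Suc i) - GG a B c q i"
    if i: "i \<le> N" for i
  proof -
    have alt: "1 - c * (q\<^sup>2) ^ i \<noteq> 0 \<or> 1 - a * q ^ i = 0"
    proof (cases "i = N")
      case True then show ?thesis using aqN by simp
    next
      case False
      then have "qpoch c (q\<^sup>2) (Suc i) \<noteq> 0" using Ch i by simp
      then show ?thesis by (simp add: qpoch_Suc)
    qed
    show ?thesis unfolding al_def
      by (rule term_identity[OF q a1 c1 _ _ alt cd]) (use Qh Ch i in auto)
  qed
  have "(\<Sum>i=0..N. tm a B c q i - al * tm (a * q\<^sup>2) B (c * q\<^sup>2) q i) = GG a B c q (Suc N) - GG a B c q 0"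
    using T by (simp add: sum_Suc_diff)
  also have "GG a B c q (Suc N) = 0"
    using qpoch_zero[OF aqN, of "Suc N"] by (simp add: GG_def)
  finally have S1: "(\<Sum>i=0..N. tm a B c q i) = al * (\<Sum>i=0..N. tm (a * q\<^sup>2) B (c * q\<^sup>2) q i)"
    by (simp add: sum_subtractf sum_distrib_left GG_def)
  have "(\<Sum>i=0..N. tm (a * q\<^sup>2) B (c * q\<^sup>2) q i) = (\<Sum>i=0..N-2. tm (a * q\<^sup>2) B (c * q\<^sup>2) q i)"
  proof (rule sum.mono_neutral_right)
    show "\<forall>i\<in>{0..N} - {0..N - 2}. tm (a * q\<^sup>2) B (c * q\<^sup>2) q i = 0"
    proof
      fix i assume "i \<in> {0..N} - {0..N - 2}"
      then have "N - 2 < i" by auto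
      moreover have "a * q\<^sup>2 * q ^ (N - 2) = 1" unfolding aq2 using q by simp
      ultimately have "qpoch (a * q\<^sup>2) q i = 0" by (intro qpoch_zero) 
      then show "tm (a * q\<^sup>2) B (c * q\<^sup>2) q i = 0" by (simp add: tm_def)
    qed
  qed auto
  also have "\<dots> = 0" using IH aq2 by simp
  finally show ?thesis using S1 by (simp add: a_def)
qed

lemma van:
  fixes q B c :: complex and m :: nat
  assumes q: "q \<noteq> 0"
    and Qh: "\<forall>k\<le>2*m+1. qpoch q q k \<noteq> 0" and Ch: "\<forall>k\<le>2*m+1. qpoch c (q\<^sup>2) k \<noteq> 0"
    and cdef: "c = B * q * inverse (q ^ (2*m+1))"
  shows "(\<Sum>i=0..2*m+1. tm (inverse (q ^ (2*m+1))) B c q i) = 0"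
  using Qh Ch cdef
proof (induction m arbitrary: c)
  case 0
  have q1: "1 - q \<noteq> 0" using 0(1)[rule_format, of 1] by (simp add: qpoch_def)
  have cB: "c = B" using 0(3) q by simp
  have B1: "1 - B \<noteq> 0" using 0(2)[rule_format, of 1] cB by (simp add: qpoch_def)
  have e1: "(1 - inverse q) * (1 - B) * q = -((1 - q) * (1 - B))" using q by (simp add: field_simps)
  have "tm (inverse q) B c q 1 = (1 - inverse q) * (1 - B) * q / ((1 - q) * (1 - B))"
    by (simp add: tm_def qpoch_def cB)
  also have "\<dots> = -1" unfolding e1 using q1 B1 by simp
  finally have t1: "tm (inverse q) B c q 1 = -1" .
  have "(\<Sum>i=0..1. tm (inverse q) B c q i) = tm (inverse q) B c q 0 + tm (inverse q) B c q 1"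
    by simp
  then show ?case using t1 by (simp add: tm_def)
next
  case (Suc m)
  let ?N = "2 * Suc m + 1"
  have IH: "(\<Sum>i=0..2*m+1. tm (inverse (q ^ (2*m+1))) B (c * q\<^sup>2) q i) = 0"
  proof (rule Suc.IH)
    show "\<forall>k\<le>2*m+1. qpoch q q k \<noteq> 0" using Suc.prems(1) by auto
    show "\<forall>k\<le>2*m+1. qpoch (c * q\<^sup>2) (q\<^sup>2) k \<noteq> 0"
    proof (intro allI impI)
      fix k assume "k \<le> 2*m+1"
      then have "qpoch c (q\<^sup>2) (Suc k) \<noteq> 0" using Suc.prems(2) by auto
      then show "qpoch (c * q\<^sup>2) (q\<^sup>2) k \<noteq> 0" by (simp add: qpoch_Suc_left)
    qed
    show "c * q\<^sup>2 = B * q * inverse (q ^ (2 * m + 1))"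
      using Suc.prems(3) q by (simp add: field_simps power2_eq_square)
  qed
  show ?case
    by (rule van_step[OF q _ Suc.prems(1) Suc.prems(2) Suc.prems(3)]) (use IH in auto)
qed


definition FF :: "complex \<Rightarrow> complex \<Rightarrow> complex \<Rightarrow> complex \<Rightarrow> complex \<Rightarrow> nat \<Rightarrow> complex" where
  "FF a b c q x n = (\<Sum>k=0..n. qpoch a q k * qpoch b q k * qpoch x q k
       / (qpoch q q k * qpoch c (q\<^sup>2) k) * q ^ k)"

lemma FF_zero: "FF a b c q 0 n = (\<Sum>i=0..n. tm a b c q i)"
  unfolding FF_def tm_def by (intro sum.cong) (auto simp: qpoch_def)

lemma key_diff: fixes a b c x A Bb Z P W q v :: complex
  assumes "P \<noteq> 0" "W \<noteq> 0" "1 - q*v \<noteq> 0" "1 - c \<noteq> 0"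
  shows "(1-a)*A*((1-b)*Bb)*((1-x)*Z)/((P*(1-q*v))*((1-c)*W))*(q*v)
       - (1-a)*A*((1-b)*Bb)*(Z*(1-x*(q*v)))/((P*(1-q*v))*((1-c)*W))*(q*v)
       = -x*((1-a)*(1-b)*q/(1-c))*(A*Bb*Z/(P*W)*v)"
proof -
  have "(1-a)*A*((1-b)*Bb)*((1-x)*Z)/((P*(1-q*v))*((1-c)*W))*(q*v)
       - (1-a)*A*((1-b)*Bb)*(Z*(1-x*(q*v)))/((P*(1-q*v))*((1-c)*W))*(q*v)
     = ((1-a)*A*((1-b)*Bb)*(q*v)) * (- x * Z * (1 - q*v)) / ((P*(1-q*v))*((1-c)*W))"
    by (simp add: diff_divide_distrib[symmetric] left_diff_distrib[symmetric] algebra_simps)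
  also have "\<dots> = ((1-a)*A*((1-b)*Bb)*(q*v)) * (- x * Z) / (P*((1-c)*W))"
    using assms(3) by (simp add: mult.assoc)
  also have "\<dots> = -x*((1-a)*(1-b)*q/(1-c))*(A*Bb*Z/(P*W)*v)"
    using assms by (simp add: field_simps)
  finally show ?thesis .
qed

lemma diff_term:
  fixes a b c q x :: complex
  assumes Q1: "qpoch q q (Suc k) \<noteq> 0" and c1: "c \<noteq> 1"
  shows "qpoch a q (Suc k) * qpoch b q (Suc k) * qpoch x q (Suc k)
       / (qpoch q q (Suc k) * qpoch c (q\<^sup>2) (Suc k)) * q ^ Suc k
     - qpoch a q (Suc k) * qpoch b q (Suc k) * qpoch (q * x) q (Suc k)
       / (qpoch q q (Suc k) * qpoch c (q\<^sup>2) (Suc k)) * q ^ Suc k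
     = - x * ((1 - a) * (1 - b) * q / (1 - c)) *
       (qpoch (a * q) q k * qpoch (b * q) q k * qpoch (q * x) q k
       / (qpoch q q k * qpoch (c * q\<^sup>2) (q\<^sup>2) k) * q ^ k)"
proof -
  define A where "A = qpoch (a * q) q k"
  define Bb where "Bb = qpoch (b * q) q k"
  define P where "P = qpoch q q k"
  define W where "W = qpoch (c * q\<^sup>2) (q\<^sup>2) k"
  define Z where "Z = qpoch (q * x) q k"
  define v where "v = q ^ k"
  have ea: "qpoch a q (Suc k) = (1 - a) * A" by (simp add: A_def qpoch_Suc_left)
  have eb: "qpoch b q (Suc k) = (1 - b) * Bb" by (simp add: Bb_def qpoch_Suc_left)
  have ex: "qpoch x q (Suc k) = (1 - x) * Z" by (simp add: Z_def qpoch_Suc_left mult.commute)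
  have eqx: "qpoch (q * x) q (Suc k) = Z * (1 - x * (q * v))" by (simp add: Z_def v_def qpoch_Suc ac_simps)
  have eP: "qpoch q q (Suc k) = P * (1 - q * v)" by (simp add: P_def v_def qpoch_Suc)
  have eC: "qpoch c (q\<^sup>2) (Suc k) = (1 - c) * W" by (simp add: W_def qpoch_Suc_left)
  have P0: "P \<noteq> 0" and qv: "1 - q * v \<noteq> 0" using Q1 eP by auto
  have c0: "1 - c \<noteq> 0" using c1 by simp
  show ?thesis
  proof (cases "W = 0")
    case True then show ?thesis unfolding ea eb ex eqx eP eC by (simp add: W_def[symmetric])
  next
    case False
    have qs: "q ^ Suc k = q * v" by (simp add: v_def)
    have key: "(1-a)*A*((1-b)*Bb)*((1-x)*Z)/((P*(1-q*v))*((1-c)*W))*(q*v)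
       - (1-a)*A*((1-b)*Bb)*(Z*(1-x*(q*v)))/((P*(1-q*v))*((1-c)*W))*(q*v)
       = -x*((1-a)*(1-b)*q/(1-c))*(A*Bb*Z/(P*W)*v)"
      using key_diff[OF P0 False qv c0] .
    show ?thesis unfolding ea eb ex eqx eP eC qs
      unfolding A_def[symmetric] Bb_def[symmetric] P_def[symmetric] W_def[symmetric] Z_def[symmetric] v_def[symmetric]
      by (rule key)
  qed
qed

lemma FF_diff:
  fixes a b c q x :: complex
  assumes Qh: "\<forall>k\<le>Suc n. qpoch q q k \<noteq> 0" and c1: "c \<noteq> 1"
  shows "FF a b c q x (Suc n) - FF a b c q (q * x) (Suc n)
     = - x * ((1 - a) * (1 - b) * q / (1 - c)) * FF (a * q) (b * q) (c * q\<^sup>2) q (q * x) n"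
proof -
  have "FF a b c q x (Suc n) - FF a b c q (q * x) (Suc n)
     = (\<Sum>k=0..Suc n. qpoch a q k * qpoch b q k * qpoch x q k
       / (qpoch q q k * qpoch c (q\<^sup>2) k) * q ^ k - qpoch a q k * qpoch b q k * qpoch (q * x) q k
       / (qpoch q q k * qpoch c (q\<^sup>2) k) * q ^ k)"
    unfolding FF_def sum_subtractf ..
  also have "\<dots> = (\<Sum>k=0..n. qpoch a q (Suc k) * qpoch b q (Suc k) * qpoch x q (Suc k)
       / (qpoch q q (Suc k) * qpoch c (q\<^sup>2) (Suc k)) * q ^ Suc k
     - qpoch a q (Suc k) * qpoch b q (Suc k) * qpoch (q * x) q (Suc k)
       / (qpoch q q (Suc k) * qpoch c (q\<^sup>2) (Suc k)) * q ^ Suc k)"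
    unfolding sum.atLeast0_atMost_Suc_shift by simp
  also have "\<dots> = (\<Sum>k=0..n. - x * ((1 - a) * (1 - b) * q / (1 - c)) *
       (qpoch (a * q) q k * qpoch (b * q) q k * qpoch (q * x) q k
       / (qpoch q q k * qpoch (c * q\<^sup>2) (q\<^sup>2) k) * q ^ k))"
    by (intro sum.cong refl diff_term c1) (use Qh in auto)
  also have "\<dots> = - x * ((1 - a) * (1 - b) * q / (1 - c)) * FF (a * q) (b * q) (c * q\<^sup>2) q (q * x) n"
    unfolding FF_def sum_distrib_left ..
  finally show ?thesis .
qed

definition PF :: "complex \<Rightarrow> complex \<Rightarrow> complex \<Rightarrow> complex \<Rightarrow> nat \<Rightarrow> complex poly" where
  "PF a b c q n = (\<Sum>k=0..n. smult (qpoch a q k * qpoch b q k / (qpoch q q k * qpoch c (q\<^sup>2) k) * q ^ k)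
      (\<Prod>j<k. [:1, - (q ^ j):]))"

lemma poly_qp: "poly (\<Prod>j<k. [:1, - (q ^ j):]) x = qpoch x q k"
  by (simp add: poly_prod qpoch_def mult.commute)

lemma deg_qp: "degree (\<Prod>j<k. [:1, - (q ^ j):]) \<le> k"
proof (induction k)
  case 0 then show ?case by simp
next
  case (Suc k)
  have "degree ((\<Prod>j<k. [:1, - (q ^ j):]) * [:1, - (q ^ k):]) \<le> degree (\<Prod>j<k. [:1, - (q ^ j):]) + degree [:1, - (q ^ k):]"
    by (rule degree_mult_le)
  also have "\<dots> \<le> Suc k" using Suc by simp
  finally show ?case by (simp add: mult.commute)
qed

lemma poly_PF: "poly (PF a b c q n) x = FF a b c q x n"
  unfolding PF_def FF_def by (simp add: poly_sum poly_qp ac_simps)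

lemma deg_PF: "degree (PF a b c q n) \<le> n"
  unfolding PF_def
proof (intro degree_sum_le)
  fix k assume "k \<in> {0..n}"
  then show "degree (smult (qpoch a q k * qpoch b q k / (qpoch q q k * qpoch c (q\<^sup>2) k) * q ^ k)
      (\<Prod>j<k. [:1, - (q ^ j):])) \<le> n"
    using deg_qp[where k=k and q=q] by (meson atLeastAtMost_iff degree_smult_le le_trans)
qed simp

lemma inv_zero:
  fixes H :: "complex poly" and q :: complex
  assumes inv: "\<forall>x. poly H (q * x) = poly H x" and h0: "poly H 0 = 0" and dg: "degree H \<le> n"
    and qj: "\<forall>j. 1 \<le> j \<and> j \<le> n \<longrightarrow> q ^ j \<noteq> 1"
  shows "H = 0"
proof -
  have "poly (pcompose H [:0, q:]) = poly H"
    using inv by (simp add: fun_eq_iff poly_pcompose mult.commute)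
  then have E: "pcompose H [:0, q:] = H" by (simp add: poly_eq_poly_eq_iff)
  show ?thesis
  proof (rule poly_eqI)
    fix j
    show "coeff H j = coeff 0 j"
    proof (cases "j = 0")
      case True then show ?thesis using h0 by (simp add: poly_0_coeff_0)
    next
      case False
      show ?thesis
      proof (cases "j \<le> n")
        case True
        have "q ^ j * coeff H j = coeff H j" using coeff_pcompose_linear[of H q j] E by simp
        then have "(q ^ j - 1) * coeff H j = 0" by (simp add: algebra_simps)
        moreover have "q ^ j - 1 \<noteq> 0" using qj True False by auto
        ultimately show ?thesis by simp
      next
        case False then show ?thesis using dg by (simp add: coeff_eq_0)
      qed
    qed
  qed
qed

lemma par:
  fixes q b c :: complex and n :: nat
  assumes q: "q \<noteq> 0"
    and Qh: "\<forall>k\<le>n. qpoch q q k \<noteq> 0" and Ch: "\<forall>k\<le>n. qpoch c (q\<^sup>2) k \<noteq> 0"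
    and cdef: "c = b * q * inverse (q ^ n)"
  shows "FF (inverse (q ^ n)) b c q x n = (-1) ^ n * FF (inverse (q ^ n)) b c q (-x) n"
  using Qh Ch cdef
proof (induction n arbitrary: b c x)
  case 0 then show ?case by (simp add: FF_def)
next
  case (Suc n)
  define a where "a = inverse (q ^ Suc n)"
  have aq: "a * q = inverse (q ^ n)" using q by (simp add: a_def field_simps)
  have c1: "c \<noteq> 1" using Suc.prems(2)[rule_format, of 1] by (simp add: qpoch_def)
  define f where "f = (\<lambda>y. FF a b c q y (Suc n))"
  define g where "g = (\<lambda>y. FF (inverse (q ^ n)) (b * q) (c * q\<^sup>2) q y n)"
  define \<kappa> where "\<kappa> = (1 - a) * (1 - b) * q / (1 - c)"
  have IH: "g y = (-1) ^ n * g (- y)" for y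
    unfolding g_def
  proof (rule Suc.IH)
    show "\<forall>k\<le>n. qpoch q q k \<noteq> 0" using Suc.prems(1) by auto
    show "\<forall>k\<le>n. qpoch (c * q\<^sup>2) (q\<^sup>2) k \<noteq> 0"
    proof (intro allI impI)
      fix k assume "k \<le> n"
      then have "qpoch c (q\<^sup>2) (Suc k) \<noteq> 0" using Suc.prems(2) by auto
      then show "qpoch (c * q\<^sup>2) (q\<^sup>2) k \<noteq> 0" by (simp add: qpoch_Suc_left)
    qed
    show "c * q\<^sup>2 = b * q * q * inverse (q ^ n)"
      using Suc.prems(3) q by (simp add: field_simps power2_eq_square)
  qed
  have D: "f y - f (q * y) = - y * \<kappa> * g (q * y)" for y
    unfolding f_def g_def \<kappa>_def using FF_diff[OF Suc.prems(1) c1, of a b y] aq by simp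
  define h where "h = (\<lambda>y. f y - (-1) ^ Suc n * f (- y))"
  have hinv: "h (q * y) = h y" for y
  proof -
    have g1: "g (- (q * y)) = (-1) ^ n * g (q * y)" using IH[of "- (q * y)"] by simp
    have "h y - h (q * y) = (f y - f (q * y)) - (-1) ^ Suc n * (f (- y) - f (q * (- y)))"
      by (simp add: h_def algebra_simps)
    also have "\<dots> = - y * \<kappa> * g (q * y) - (-1) ^ Suc n * (y * \<kappa> * g (- (q * y)))"
      using D[of y] D[of "- y"] by simp
    also have "\<dots> = - y * \<kappa> * g (q * y) + ((-1) ^ n * (-1) ^ n) * (y * \<kappa> * g (q * y))"
      unfolding g1 by (simp add: algebra_simps)
    also have "((-1::complex) ^ n * (-1) ^ n) = 1"
      by (simp add: power_mult_distrib[symmetric])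
    finally show ?thesis by simp
  qed
  have h0: "h 0 = 0"
  proof (cases "even (Suc n)")
    case True then show ?thesis by (simp add: h_def)
  next
    case False
    then obtain m where m: "Suc n = 2 * m + 1" by (metis oddE)
    have "f 0 = 0"
      unfolding f_def FF_zero a_def m
      by (rule van[OF q]) (use Suc.prems m in auto)
    then show ?thesis by (simp add: h_def)
  qed
  define H where "H = PF a b c q (Suc n) - smult ((-1) ^ Suc n) (pcompose (PF a b c q (Suc n)) [:0, -1:])"
  have hH: "poly H y = h y" for y
    by (simp add: H_def h_def f_def poly_PF poly_pcompose)
  have dH: "degree H \<le> Suc n"
  proof -
    have "degree (pcompose (PF a b c q (Suc n)) [:0, -1:]) \<le> Suc n"
      using deg_PF[of a b c q "Suc n"] by (simp add: degree_pcompose)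
    then show ?thesis unfolding H_def
      by (meson deg_PF degree_diff_le degree_smult_le le_trans)
  qed
  have qj: "\<forall>j. 1 \<le> j \<and> j \<le> Suc n \<longrightarrow> q ^ j \<noteq> 1"
    using Suc.prems(1) qpoch_nz_pow by blast
  have "H = 0" by (rule inv_zero[OF _ _ dH qj]) (use hinv h0 hH in auto)
  then have "h x = 0" using hH[of x] by simp
  then show ?case unfolding h_def f_def a_def by (simp add: eq_neg_iff_add_eq_0)
qed


theorem lemma3p1:
  fixes n :: nat and x b q :: complex
  assumes "n \<ge> 1"
    and "q \<noteq> 0"
    and "\<forall>k\<le>n. qpoch q q k \<noteq> 0"
    and "\<forall>k\<le>n. qpoch (b * q powi (1 - int n)) (q\<^sup>2) k \<noteq> 0"
  shows "Fn n x b q = (-1) ^ n * Fn n (- x) b q"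
proof -
  have p1: "q powi (- int n) = inverse (q ^ n)" by (simp add: power_int_minus)
  have p2: "b * q powi (1 - int n) = b * q * inverse (q ^ n)"
    using assms(2) by (simp add: power_int_diff field_simps)
  have F: "Fn n y b q = FF (inverse (q ^ n)) b (b * q * inverse (q ^ n)) q y n" for y
    unfolding Fn_def FF_def p1 p2 ..
  show ?thesis unfolding F
    by (rule par[OF assms(2) assms(3)]) (use assms(4) p2 in auto)
qed

end
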